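(* Assume $d_2<h_2$ and that alternative (A) holds, namely: (i) $S_0,S_1,\dots,S_n$ are pairwise disjoint and their union is the set of all admissible $k$-words beginning with $b$; (ii) $\gamma=1$ and $\alpha_{i_1}=\cdots=\alpha_{i_n}=-1$; (iii) $B_1=\cdots=B_{n-1}$, this common block is simple, and $B_n$ differs from an initial segment of it exactly in the last symbol. Then $c^{11}_{d_1-i}=0$ for all integers $0<i<\delta$. If moreover $h_1\le h_2$, then $c^{21}_{d_1-i}=0$ for all integers $0\le i<\delta-r+1$.
   Context: Let $\mathcal{A}$ be a finite alphabet of $r$ symbols and $T=(T_{x,y})$ an irreducible $r\times r$ matrix with entries in $\{0,1\}$ (the directed graph on $\mathcal{A}$ with an edge $x\to y$ iff $T_{y,x}=1$ is strongly connected). An admissible $k$-word is a string $a_1\cdots a_k$ with $T_{a_{i+1},a_i}=1$ for all $i$. $V_k$ is the complex vector space with basis $\{[w]\}$ indexed by admissible $k$-words; $\psi_k:V_1\to V_k$ is linear with $\psi_k([a])$ the sum of $[w]$ over admissible $k$-words beginning with $a$; $T_k:V_k\to V_k$ is linear with $T_k([a_1\cdots a_k])=\sum[a_2\cdots a_kx]$ over symbols $x$ with $a_2\cdots a_kx$ admissible. For an admissible $k$-word $u=u_1\cdots u_k$, $h(u)$ is the least non-negative integer $h$ such that $u$ is the only admissible $k$-word beginning with $u_1\cdots u_{h+1}$. Fix admissible $(k+1)$-words $w_1=a_0\cdots a_k$, $w_2=b_0\cdots b_k$; put $d_1=h_1=h(a_1\cdots a_k)$, $h_2=h(b_1\cdots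 b_k)$. Let $W$ be the span of $\psi_k(V_1)$ and $T_k^i[a_1\cdots a_k]$, $0\le i\le d_1-1$ (these vectors together with the $\psi_k([a])$ form a basis of $W$, which is $T_k$-invariant). Let $d_2$ be the least non-negative integer with $T_k^{d_2}[b_1\cdots b_k]\in W$, and $\delta=h_2-d_2$. Write the unique expansion $T_k^{d_2}[b_1\cdots b_k]=\sum_{i=0}^{d_1-1}\alpha_iT_k^i[a_1\cdots a_k]+\psi_k(v)$, $v\in V_1$; let $b=b_{d_2+1}$, $\gamma$ the coefficient of $[b]$ in $v$, and $i_1<\cdots<i_n$ the indices with $\alpha_i\ne0$. Put $s_0=b_{d_2+1}\cdots b_{h_2+1}$, $s_m=a_{i_m+1}\cdots a_{h_1+1}$ ($1\le m\le n$), $S_m$ the set of admissible $k$-words beginning with $s_m$; blocks $B_m=a_{i_m+1}\cdots a_{i_{m+1}}$ ($1\le m\le n-1$), $B_n=a_{i_n+1}\cdots a_{h_1+1}$. A word is simple if it is not $A^e$ for a word $A$ and $e>1$. Correlation coefficients: for $0\le i\le d_1$, $c^{11}_{d_1-i}=1$ if $a_0a_1\cdots a_{k-i}=a_i\cdots a_k$ and $0$ otherwise; $c^{21}_{d_1-i}=1$ if $b_0\cdots b_{k-i}=a_i\cdots a_k$ and $0$ otherwise. *)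

theory Defs
  imports Complex_Main
begin

text \<open>Alphabet: a finite type 'a.  T x y = True means the matrix entry T_{x,y} = 1.
  Words are lists; the i-th symbol of a word w is w ! i (0-based).\<close>

definition irreducible01 :: "('a::finite \<Rightarrow> 'a \<Rightarrow> bool) \<Rightarrow> bool" where
  "irreducible01 T \<longleftrightarrow> (\<forall>x y. (\<lambda>a b. T b a)\<^sup>*\<^sup>* x y)"

definition admissible :: "('a \<Rightarrow> 'a \<Rightarrow> bool) \<Rightarrow> 'a list \<Rightarrow> bool" where
  "admissible T w \<longleftrightarrow> (\<forall>i. Suc i < length w \<longrightarrow> T (w ! Suc i) (w ! i))"

text \<open>Vectors of V_k are represented as functions on words, supported on the admissible
  k-words; vectors of V_1 are represented as functions on symbols.\<close>

definition bvec :: "'a list \<Rightarrow> 'a list \<Rightarrow> complex" where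
  "bvec u = (\<lambda>w. if w = u then 1 else 0)"

definition psi :: "('a \<Rightarrow> 'a \<Rightarrow> bool) \<Rightarrow> nat \<Rightarrow> ('a \<Rightarrow> complex) \<Rightarrow> 'a list \<Rightarrow> complex" where
  "psi T k v = (\<lambda>w. if admissible T w \<and> length w = k then v (hd w) else 0)"

text \<open>T_k [a_1..a_k] = sum of [a_2..a_k x] over admissible ones; hence
  (T_k f)(w) = sum of f(u) over admissible k-words u with tl u = butlast w.\<close>
definition Tk :: "('a::finite \<Rightarrow> 'a \<Rightarrow> bool) \<Rightarrow> nat \<Rightarrow> ('a list \<Rightarrow> complex) \<Rightarrow> 'a list \<Rightarrow> complex" where
  "Tk T k f = (\<lambda>w. if admissible T w \<and> length w = k
      then (\<Sum>u\<in>{u. admissible T u \<and> length u = k \<and> tl u = butlast w}. f u) else 0)"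

definition hh :: "('a \<Rightarrow> 'a \<Rightarrow> bool) \<Rightarrow> 'a list \<Rightarrow> nat" where
  "hh T u = (LEAST h. \<forall>w. admissible T w \<and> length w = length u \<and> take (Suc h) w = take (Suc h) u
      \<longrightarrow> w = u)"

definition inW :: "('a::finite \<Rightarrow> 'a \<Rightarrow> bool) \<Rightarrow> nat \<Rightarrow> 'a list \<Rightarrow> nat \<Rightarrow> ('a list \<Rightarrow> complex) \<Rightarrow> bool" where
  "inW T k a d1 x \<longleftrightarrow> (\<exists>\<alpha> v. \<forall>w. x w =
      (\<Sum>i<d1. \<alpha> i * (Tk T k ^^ i) (bvec a) w) + psi T k v w)"

definition simple_word :: "'a list \<Rightarrow> bool" where
  "simple_word w \<longleftrightarrow> \<not> (\<exists>A e. e > (1::nat) \<and> w = concat (replicate e A))"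

definition words_from :: "('a \<Rightarrow> 'a \<Rightarrow> bool) \<Rightarrow> nat \<Rightarrow> 'a list \<Rightarrow> 'a list set" where
  "words_from T k s = {w. admissible T w \<and> length w = k \<and> take (length s) w = s}"

text \<open>Correlation coefficient, indexed by the shift i (the paper's subscript is d1 - i):
  corr x y i = 1 iff x_0 .. x_{k-i} = y_i .. y_k, where |x| = |y| = k+1.\<close>
definition corr :: "'a list \<Rightarrow> 'a list \<Rightarrow> nat \<Rightarrow> nat" where
  "corr x y i = (if take (length x - i) x = drop i y then 1 else 0)"

end

theory Submission
  imports Defs
begin

lemma adm_succ: "admissible T w \<longleftrightarrow> successively (\<lambda>x y. T y x) w"
  by (simp add: admissible_def successively_conv_nth)

fun walk :: "('a \<Rightarrow> 'a) \<Rightarrow> 'a \<Rightarrow> nat \<Rightarrow> 'a list" where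
  "walk g x 0 = []"
| "walk g x (Suc m) = g x # walk g (g x) m"

lemma length_walk[simp]: "length (walk g x m) = m"
  by (induction m arbitrary: x) auto

lemma succ_walk: "(\<And>z. P z (g z)) \<Longrightarrow> successively P (x # walk g x m)"
  by (induction m arbitrary: x) auto

lemma adm_take: "admissible T w \<Longrightarrow> admissible T (take n w)"
  by (auto simp: admissible_def)

lemma adm_drop: "admissible T w \<Longrightarrow> admissible T (drop n w)"
proof (unfold admissible_def, intro allI impI)
  fix i assume a: "\<forall>i. Suc i < length w \<longrightarrow> T (w ! Suc i) (w ! i)" and "Suc i < length (drop n w)"
  then have "Suc (n+i) < length w" by simp
  then show "T (drop n w ! Suc i) (drop n w ! i)" using a by simp
qed

lemma adm_app:
  assumes "admissible T xs" "xs \<noteq> []" "T y (last xs)" "(\<And>z. T (g z) z)"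
  shows "admissible T (xs @ y # walk g y m)"
  using assms unfolding adm_succ
  by (auto simp: successively_append_iff succ_walk)

lemma nE_walk:
  assumes "\<And>z. \<not> (z = e1 \<and> g z = e2)" "Suc t < Suc m"
  shows "\<not> ((x # walk g x m) ! t = e1 \<and> (x # walk g x m) ! Suc t = e2)"
proof -
  have "successively (\<lambda>a b. \<not> (a = e1 \<and> b = e2)) (x # walk g x m)"
    by (rule succ_walk) (use assms(1) in auto)
  then show ?thesis using assms(2) by (auto dest: successively_nth)
qed

lemma hh_props:
  assumes "length u = k" "k \<ge> 1"
  shows "hh T u < k"
    and "\<forall>w. admissible T w \<and> length w = k \<and> take (Suc (hh T u)) w = take (Suc (hh T u)) u \<longrightarrow> w = u"
proof -
  let ?Q = "\<lambda>h. \<forall>w. admissible T w \<and> length w = length u \<and> take (Suc h) w = take (Suc h) u \<longrightarrow> w = u"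
  have qk: "?Q (k - 1)" using assms by auto
  have "hh T u \<le> k - 1" unfolding hh_def by (rule Least_le) (rule qk)
  then show "hh T u < k" using assms by linarith
  have "?Q (hh T u)" unfolding hh_def by (rule LeastI) (rule qk)
  then show "\<forall>w. admissible T w \<and> length w = k \<and> take (Suc (hh T u)) w = take (Suc (hh T u)) u \<longrightarrow> w = u"
    using assms by simp
qed

lemma hh_branch:
  assumes "length u = k" "k \<ge> 1" "hh T u \<ge> 1"
  shows "\<exists>y. T y (u ! (hh T u - 1)) \<and> y \<noteq> u ! hh T u"
proof -
  let ?h = "hh T u"
  let ?Q = "\<lambda>h. \<forall>w. admissible T w \<and> length w = length u \<and> take (Suc h) w = take (Suc h) u \<longrightarrow> w = u"
  have hk: "?h < k" and Qh: "?Q ?h" using hh_props[OF assms(1,2), of T] assms(1) by auto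
  have "\<not> ?Q (?h - 1)"
  proof
    assume "?Q (?h - 1)"
    then have "?h \<le> ?h - 1" unfolding hh_def by (rule Least_le)
    then show False using assms(3) by linarith
  qed
  then obtain w where w: "admissible T w" "length w = k" "take ?h w = take ?h u" "w \<noteq> u"
    using assms(1,3) by auto
  have "take (Suc ?h) w \<noteq> take (Suc ?h) u" using Qh w assms(1) by auto
  then have ne: "w ! ?h \<noteq> u ! ?h" using w(2,3) assms(1) hk
    by (simp add: take_Suc_conv_app_nth)
  have "w ! (?h - 1) = u ! (?h - 1)"
    using w(3) assms(3) by (metis diff_less less_numeral_extra(1) nth_take order_less_le_trans le_refl)
  moreover have "T (w ! ?h) (w ! (?h - 1))"
    using w(1,2) hk assms(3) unfolding admissible_def
    by (metis Suc_diff_1 less_le_trans less_numeral_extra(1) order_less_le_trans le_refl)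
  ultimately show ?thesis using ne by metis
qed


theorem corollary3p3:
  fixes T :: "'a::finite \<Rightarrow> 'a \<Rightarrow> bool"
    and k :: nat and wa wb :: "'a list"
    and \<alpha> :: "nat \<Rightarrow> complex" and v :: "'a \<Rightarrow> complex"
  assumes irr: "irreducible01 T"
    and k: "k \<ge> 1"
    and wa: "admissible T wa" "length wa = Suc k"
    and wb: "admissible T wb" "length wb = Suc k"
  defines "d1 \<equiv> hh T (tl wa)"
    and "h1 \<equiv> hh T (tl wa)"
    and "h2 \<equiv> hh T (tl wb)"
  defines "d2 \<equiv> LEAST d. inW T k (tl wa) d1 ((Tk T k ^^ d) (bvec (tl wb)))"
  defines "\<delta> \<equiv> h2 - d2"
  assumes expansion: "\<forall>w. (Tk T k ^^ d2) (bvec (tl wb)) w =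
      (\<Sum>i<d1. \<alpha> i * (Tk T k ^^ i) (bvec (tl wa)) w) + psi T k v w"
  defines "b \<equiv> wb ! Suc d2"
    and "\<gamma> \<equiv> v (wb ! Suc d2)"
    and "idx \<equiv> sorted_list_of_set {i. i < d1 \<and> \<alpha> i \<noteq> 0}"
  defines "n \<equiv> length idx"
  defines "s \<equiv> (\<lambda>m. if m = 0 then take (h2 - d2 + 1) (drop (Suc d2) wb)
                    else drop (Suc (idx ! (m - 1))) (take (h1 + 2) wa))"
  defines "B \<equiv> (\<lambda>m. if m < n then drop (Suc (idx ! (m - 1))) (take (Suc (idx ! m)) wa)
                    else drop (Suc (idx ! (n - 1))) (take (h1 + 2) wa))"
  assumes d2_lt: "d2 < h2"
    and A_i: "\<forall>m m'. m \<le> n \<longrightarrow> m' \<le> n \<longrightarrow> m \<noteq> m' \<longrightarrow>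
                 words_from T k (s m) \<inter> words_from T k (s m') = {}"
             "(\<Union>m\<le>n. words_from T k (s m)) = words_from T k [b]"
    and A_ii: "\<gamma> = 1" "\<forall>i<d1. \<alpha> i \<noteq> 0 \<longrightarrow> \<alpha> i = -1"
    and A_iii: "n \<ge> 1"
       "\<exists>C. (\<forall>m. 1 \<le> m \<and> m \<le> n - 1 \<longrightarrow> B m = C) \<and> simple_word C \<and>
            B n \<noteq> [] \<and> length (B n) \<le> length C \<and>
            take (length (B n) - 1) (B n) = take (length (B n) - 1) C \<and>
            B n ! (length (B n) - 1) \<noteq> C ! (length (B n) - 1)"
  shows "(\<forall>i. 0 < i \<and> i < \<delta> \<longrightarrow> corr wa wa i = 0) \<and>
         (h1 \<le> h2 \<longrightarrow> (\<forall>i. int i < int \<delta> - int (card (UNIV :: 'a set)) + 1 \<longrightarrow> corr wb wa i = 0))"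

proof -
  define u where "u = tl wa"
  have lu: "length u = k" using wa(2) by (simp add: u_def)
  have lwb: "length (tl wb) = k" using wb(2) by simp
  have uwa: "u ! q = wa ! Suc q" if "q < k" for q using wa(2) that by (simp add: u_def nth_tl)
  have ubw: "tl wb ! q = wb ! Suc q" if "q < k" for q using wb(2) that by (simp add: nth_tl)
  have d1h1: "d1 = h1" by (simp add: d1_def h1_def)
  have hu: "hh T u = h1" by (simp add: h1_def u_def)
  have hb: "hh T (tl wb) = h2" by (simp add: h2_def)
  have h1k: "h1 < k" using hh_props(1)[OF lu k, of T] hu by simp
  have Q1: "\<forall>w. admissible T w \<and> length w = k \<and> take (Suc h1) w = take (Suc h1) u \<longrightarrow> w = u"
    using hh_props(2)[OF lu k, of T] hu by simp
  have h2k: "h2 < k" using hh_props(1)[OF lwb k, of T] hb by simp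
  have n_pos: "idx \<noteq> []" using A_iii(1) n_def by auto
  have fin: "finite {i. i < d1 \<and> \<alpha> i \<noteq> 0}"
    by (rule finite_subset[of _ "{..<d1}"]) auto
  have set_idx: "set idx = {i. i < d1 \<and> \<alpha> i \<noteq> 0}" using fin by (simp add: idx_def)
  have idx_lt: "idx ! (m-1) < h1" if "1 \<le> m" "m \<le> n" for m
  proof -
    have "idx ! (m-1) \<in> set idx" using that n_def by simp
    then show ?thesis using set_idx d1h1 by auto
  qed
  have h1pos: "h1 \<ge> 1" using idx_lt[of 1] A_iii(1) by simp
  have h2pos: "h2 \<ge> 1" using d2_lt by simp
  have dpos: "\<delta> \<ge> 1" using d2_lt by (simp add: \<delta>_def)
  have h2d: "h2 = d2 + \<delta>" using d2_lt by (simp add: \<delta>_def)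
  define e1 where "e1 = wa ! h1"
  define e2 where "e2 = wa ! Suc h1"
  obtain y1 where y1: "T y1 e1" "y1 \<noteq> e2"
  proof -
    have "\<exists>y. T y (u ! (hh T u - 1)) \<and> y \<noteq> u ! hh T u"
      using hh_branch[OF lu k, of T] h1pos hu by simp
    moreover have "u ! (h1 - 1) = e1" "u ! h1 = e2"
      using uwa h1k h1pos by (simp_all add: e1_def e2_def)
    ultimately show ?thesis using that hu by auto
  qed
  obtain yb where yb: "T yb (wb ! h2)" "yb \<noteq> wb ! Suc h2"
  proof -
    have "\<exists>y. T y (tl wb ! (hh T (tl wb) - 1)) \<and> y \<noteq> tl wb ! hh T (tl wb)"
      using hh_branch[OF lwb k, of T] h2pos hb by simp
    moreover have "tl wb ! (h2 - 1) = wb ! h2" "tl wb ! h2 = wb ! Suc h2"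
      using ubw h2k h2pos by simp_all
    ultimately show ?thesis using that hb by auto
  qed
  have succ: "\<exists>y. T y x" for x
  proof -
    have e: "T (wa ! 1) (wa ! 0)" using wa k unfolding admissible_def by auto
    have "(\<lambda>a b. T b a)\<^sup>*\<^sup>* x (wa ! 0)" using irr unfolding irreducible01_def by blast
    then show "\<exists>y. T y x"
    proof (cases rule: converse_rtranclpE)
      case base then show ?thesis using e by blast
    next
      case (step z) then show ?thesis by blast
    qed
  qed
  define f where "f = (\<lambda>x. if x = e1 then y1 else (SOME y. T y x))"
  have fT: "T (f x) x" for x unfolding f_def using y1(1) someI_ex[OF succ] by auto
  have fE: "\<not> (x = e1 \<and> f x = e2)" for x using y1 by (simp add: f_def)
  have sm_len: "length (s m) = Suc h1 - idx ! (m-1)" if "1 \<le> m" "m \<le> n" for m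
    using that idx_lt[OF that] h1k wa(2) by (simp add: s_def)
  have sm_nth: "s m ! j = wa ! (Suc (idx!(m-1)) + j)" if "1 \<le> m" "m \<le> n" "j < length (s m)" for m j
    using that idx_lt[OF that(1,2)] h1k wa(2) sm_len[OF that(1,2)] by (simp add: s_def)
  have cover: "\<exists>m\<le>n. w \<in> words_from T k (s m)" if "w \<in> words_from T k [b]" for w
    using A_i(2) that by blast
  have pref: "length s' \<le> k \<and> (\<forall>j<length s'. w ! j = s' ! j)" if "w \<in> words_from T k s'" for w s'
  proof -
    have w: "length w = k" "take (length s') w = s'" using that by (auto simp: words_from_def)
    have "length (take (length s') w) = min (length w) (length s')" by (rule length_take)
    then have "length s' \<le> k" unfolding w(2) w(1) by (simp add: min_def split: if_splits)
    moreover have "\<forall>j<length s'. w ! j = s' ! j" using w(2) by (metis nth_take)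
    ultimately show ?thesis by blast
  qed
  have smE: "Suc (h1 - idx!(m-1) - 1) < k \<and> w ! (h1 - idx!(m-1) - 1) = e1 \<and> w ! Suc (h1 - idx!(m-1) - 1) = e2"
    if "1 \<le> m" "m \<le> n" "w \<in> words_from T k (s m)" for m w
  proof -
    let ?i = "idx!(m-1)"
    have il: "?i < h1" using idx_lt that by simp
    have L: "length (s m) = Suc h1 - ?i" using sm_len that by simp
    have p: "length (s m) \<le> k" "\<forall>j<length (s m). w ! j = s m ! j" using pref[OF that(3)] by auto
    have a: "s m ! (h1 - ?i - 1) = e1" using sm_nth[OF that(1,2), of "h1 - ?i - 1"] L il
      by (simp add: e1_def)
    have c: "s m ! Suc (h1 - ?i - 1) = e2" using sm_nth[OF that(1,2), of "Suc (h1 - ?i - 1)"] L il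
      by (simp add: e2_def)
    show ?thesis using a c p L il by simp
  qed
  have s0_len: "length (s 0) = Suc \<delta>" using h2k wb(2) d2_lt by (simp add: s_def \<delta>_def)
  have s0_nth: "s 0 ! j = wb ! (Suc d2 + j)" if "j \<le> \<delta>" for j
    using that h2k wb(2) d2_lt by (simp add: s_def \<delta>_def)
  define w0 where "w0 = b # walk f b (k - 1)"
  have w0_len: "length w0 = k" using k by (simp add: w0_def)
  have w0_adm: "admissible T w0" unfolding w0_def adm_succ by (rule succ_walk) (rule fT)
  have w0_in: "w0 \<in> words_from T k [b]" using w0_len w0_adm by (simp add: words_from_def w0_def)
  have w0_nE: "\<not> (w0 ! t = e1 \<and> w0 ! Suc t = e2)" if "Suc t < k" for t
    using nE_walk[OF fE, of t "k-1" b] that k unfolding w0_def by simp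
  obtain m0 where m0: "m0 \<le> n" "w0 \<in> words_from T k (s m0)" using cover w0_in by blast
  have "m0 = 0"
  proof (rule ccontr)
    assume "m0 \<noteq> 0"
    then have "1 \<le> m0" by simp
    from smE[OF this m0] w0_nE show False by blast
  qed
  then have w0s0: "\<forall>j<Suc \<delta>. w0 ! j = s 0 ! j" and dk: "Suc \<delta> \<le> k"
    using pref[OF m0(2)] s0_len by auto
  have E: "\<not> (wb ! (Suc d2 + t) = e1 \<and> wb ! (Suc d2 + Suc t) = e2)" if t: "t < \<delta>" for t
  proof
    assume c: "wb ! (Suc d2 + t) = e1 \<and> wb ! (Suc d2 + Suc t) = e2"
    have "w0 ! t = e1" using w0s0 s0_nth[of t] t c by simp
    moreover have "w0 ! Suc t = e2" using w0s0 s0_nth[of "Suc t"] t c by simp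
    ultimately show False using w0_nE[of t] t dk by simp
  qed
  define P where "P = take \<delta> (s 0) @ yb # walk f yb (k - Suc \<delta>)"
  have ltd: "length (take \<delta> (s 0)) = \<delta>" using s0_len by simp
  have P_len: "length P = k" using ltd dk by (simp add: P_def)
  have P_pre: "P ! j = wb ! (Suc d2 + j)" if "j < \<delta>" for j
    using that ltd s0_nth[of j] by (simp add: P_def nth_append)
  have P_tail: "P ! (\<delta> + j) = (yb # walk f yb (k - Suc \<delta>)) ! j" for j
    using ltd unfolding P_def by (metis nth_append_length_plus)
  have P_d: "P ! \<delta> = yb" using P_tail[of 0] by simp
  have s0_adm: "admissible T (s 0)" using wb(1) by (simp add: s_def adm_take adm_drop)
  have last_t: "last (take \<delta> (s 0)) = wb ! h2"
  proof -
    have "last (take \<delta> (s 0)) = take \<delta> (s 0) ! (\<delta> - 1)" using ltd dpos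
      by (metis last_conv_nth list.size(3) not_one_le_zero)
    also have "\<dots> = s 0 ! (\<delta> - 1)" using dpos by simp
    also have "\<dots> = wb ! h2" using s0_nth[of "\<delta> - 1"] dpos h2d by simp
    finally show ?thesis .
  qed
  have P_adm: "admissible T P" unfolding P_def
  proof (rule adm_app)
    show "admissible T (take \<delta> (s 0))" using s0_adm by (rule adm_take)
    show "take \<delta> (s 0) \<noteq> []" using ltd dpos by auto
    show "T yb (last (take \<delta> (s 0)))" using last_t yb(1) by simp
    show "T (f z) z" for z by (rule fT)
  qed
  have P0: "P ! 0 = b" using P_pre[of 0] dpos by (simp add: b_def)
  have P_in: "P \<in> words_from T k [b]"
  proof -
    have "take 1 P = [P ! 0]" using P_len k by (cases P) auto
    then show ?thesis using P_len P_adm P0 by (simp add: words_from_def)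
  qed
  obtain mP where mP: "mP \<le> n" "P \<in> words_from T k (s mP)" using cover P_in by blast
  have mP0: "mP \<noteq> 0"
  proof
    assume "mP = 0"
    then have "P ! \<delta> = s 0 ! \<delta>" using pref[OF mP(2)] s0_len by simp
    then have "yb = wb ! Suc h2" using P_d s0_nth[of \<delta>] h2d by simp
    then show False using yb(2) by simp
  qed
  then have mP1: "1 \<le> mP" by simp
  define i0 where "i0 = idx ! (mP - 1)"
  have i0h: "i0 < h1" using idx_lt[OF mP1 mP(1)] by (simp add: i0_def)
  have i0E: "Suc (h1 - i0 - 1) < k" "P ! (h1 - i0 - 1) = e1" "P ! Suc (h1 - i0 - 1) = e2"
    using smE[OF mP1 mP(1) mP(2)] by (simp_all add: i0_def)
  have hi: "h1 - i0 = \<delta>"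
  proof -
    let ?t = "h1 - i0 - 1"
    have "\<not> (Suc ?t < \<delta>)"
    proof
      assume a: "Suc ?t < \<delta>"
      have "wb ! (Suc d2 + ?t) = e1" using P_pre[of ?t] a i0E by simp
      moreover have "wb ! (Suc d2 + Suc ?t) = e2" using P_pre[of "Suc ?t"] a i0E by simp
      ultimately show False using E[of ?t] a by simp
    qed
    moreover have "\<not> (\<delta> \<le> ?t)"
    proof
      assume a: "\<delta> \<le> ?t"
      define j where "j = ?t - \<delta>"
      have tj: "?t = \<delta> + j" using a j_def by simp
      have "(yb # walk f yb (k - Suc \<delta>)) ! j = e1" using P_tail[of j] tj i0E by simp
      moreover have "(yb # walk f yb (k - Suc \<delta>)) ! Suc j = e2"
        using P_tail[of "Suc j"] tj i0E by simp
      moreover have "Suc j < Suc (k - Suc \<delta>)" using tj i0E(1) dk by simp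
      ultimately show False using nE_walk[OF fE, of j "k - Suc \<delta>" yb] by simp
    qed
    ultimately show ?thesis using i0h by linarith
  qed
  have M1: "wa ! (Suc i0 + j) = wb ! (Suc d2 + j)" if "j < \<delta>" for j
  proof -
    have L: "length (s mP) = Suc \<delta>" using sm_len[OF mP1 mP(1)] hi i0h by (simp add: i0_def)
    have "s mP ! j = wa ! (Suc i0 + j)" using sm_nth[OF mP1 mP(1), of j] L that by (simp add: i0_def)
    moreover have "P ! j = s mP ! j" using pref[OF mP(2)] L that by simp
    ultimately show ?thesis using P_pre[OF that] by simp
  qed
  have C1: "\<forall>i. 0 < i \<and> i < \<delta> \<longrightarrow> corr wa wa i = 0"
  proof (intro allI impI)
    fix p assume p: "0 < p \<and> p < \<delta>"
    show "corr wa wa p = 0"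
    proof (rule ccontr)
      assume "corr wa wa p \<noteq> 0"
      then have eq: "take (Suc k - p) wa = drop p wa" using wa(2) by (simp add: corr_def split: if_splits)
      have per: "wa ! t = wa ! (p + t)" if "t < Suc k - p" for t
      proof -
        have "take (Suc k - p) wa ! t = drop p wa ! t" using eq by simp
        then show ?thesis using that wa(2) by simp
      qed
      have pl: "p < h1" using p hi by linarith
      have q1: "h1 - p < Suc k - p" "p + (h1 - p) = h1" using pl h1k by linarith+
      have q2: "Suc (h1 - p) < Suc k - p" "p + Suc (h1 - p) = Suc h1" using pl h1k by linarith+
      have a1: "wa ! (h1 - p) = e1" using per[OF q1(1)] q1(2) by (simp add: e1_def)
      have a2: "wa ! Suc (h1 - p) = e2" using per[OF q2(1)] q2(2) by (simp add: e2_def)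
      define j where "j = \<delta> - 1 - p"
      have j1: "Suc i0 + j = h1 - p" unfolding j_def using p hi i0h by arith
      have j2: "Suc i0 + Suc j = Suc (h1 - p)" unfolding j_def using p hi i0h by arith
      have jd: "j < \<delta>" "Suc j < \<delta>" unfolding j_def using p by arith+
      have "wb ! (Suc d2 + j) = e1" using M1[OF jd(1)] j1 a1 by simp
      moreover have "wb ! (Suc d2 + Suc j) = e2" using M1[OF jd(2)] j2 a2 by simp
      ultimately show False using E[OF jd(1)] by simp
    qed
  qed
  have u_adm: "admissible T u" using adm_drop[OF wa(1), of 1] by (simp add: u_def drop_Suc)
  have deg1: "y = wa ! Suc q" if q: "Suc h1 \<le> q" "q < k" and ty: "T y (wa ! q)" for q y
  proof -
    define w where "w = take q u @ y # walk f y (k - Suc q)"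
    have ltq: "length (take q u) = q" using lu q by simp
    have wadm: "admissible T w" unfolding w_def
    proof (rule adm_app)
      show "admissible T (take q u)" using u_adm by (rule adm_take)
      show "take q u \<noteq> []" using ltq q by auto
      have "last (take q u) = take q u ! (q - 1)" using ltq q
        by (metis last_conv_nth list.size(3) not_less_eq_eq zero_le le_antisym Suc_le_eq less_nat_zero_code)
      also have "\<dots> = u ! (q - 1)" using q by simp
      also have "\<dots> = wa ! q" using uwa[of "q - 1"] q by simp
      finally show "T y (last (take q u))" using ty by simp
      show "T (f z) z" for z by (rule fT)
    qed
    have wlen: "length w = k" using ltq q by (simp add: w_def)
    have "take (Suc h1) w = take (Suc h1) u" using ltq q by (simp add: w_def take_append min_def)
    then have "w = u" using Q1 wadm wlen by blast
    moreover have "w ! q = y" using ltq by (simp add: w_def nth_append)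
    ultimately show ?thesis using uwa[of q] q by simp
  qed
  have T_e: "T e2 e1" using wa(1) wa(2) h1k by (simp add: admissible_def e1_def e2_def)
  have not_e1: "wa ! q \<noteq> e1" if q: "Suc h1 \<le> q" "q < k" for q
  proof
    assume "wa ! q = e1"
    then have "y1 = wa ! Suc q" "e2 = wa ! Suc q" using deg1[OF q] y1(1) T_e by auto
    then show False using y1(2) by simp
  qed
  have shift: "wa ! (p1 + t) = wa ! (p2 + t)"
    if "Suc h1 \<le> p1" "p1 < p2" "wa ! p1 = wa ! p2" "p2 + t \<le> k" for p1 p2 t
    using that
  proof (induction t)
    case 0 then show ?case by simp
  next
    case (Suc t)
    then have IH: "wa ! (p1 + t) = wa ! (p2 + t)" by simp
    have "T (wa ! Suc (p2 + t)) (wa ! (p2 + t))" using wa(1) wa(2) Suc.prems(4)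
      unfolding admissible_def by simp
    then have "T (wa ! Suc (p2 + t)) (wa ! (p1 + t))" using IH by simp
    then have "wa ! Suc (p2 + t) = wa ! Suc (p1 + t)"
      using deg1[of "p1 + t"] Suc.prems by simp
    then show ?case by simp
  qed
  have neq: "wa ! p1 \<noteq> wa ! p2" if hp: "h1 \<le> p1" "p1 < p2" "p2 < k" for p1 p2
  proof (cases "p1 = h1")
    case True
    then show ?thesis using not_e1[of p2] hp by (simp add: e1_def)
  next
    case False
    then have p1h: "Suc h1 \<le> p1" using hp by simp
    show ?thesis
    proof
      assume eq: "wa ! p1 = wa ! p2"
      define S where "S = (\<lambda>j. wa ! j) ` {Suc h1..<k}"
      have closed: "z \<in> S" if "x \<in> S" "T z x" for x z
      proof -
        obtain j where j: "Suc h1 \<le> j" "j < k" "x = wa ! j" using \<open>x \<in> S\<close> by (auto simp: S_def)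
        have z: "z = wa ! Suc j" using deg1[OF j(1,2)] j(3) \<open>T z x\<close> by simp
        show ?thesis
        proof (cases "Suc j < k")
          case True then show ?thesis using z j by (auto simp: S_def)
        next
          case False
          then have "Suc j = k" using j by simp
          have "wa ! (p1 + (k - p2)) = wa ! (p2 + (k - p2))"
            using shift[OF p1h \<open>p1 < p2\<close> eq, of "k - p2"] hp by simp
          then have "z = wa ! (p1 + (k - p2))" using z \<open>Suc j = k\<close> hp by simp
          moreover have "p1 + (k - p2) \<in> {Suc h1..<k}" using p1h hp by auto
          ultimately show ?thesis by (auto simp: S_def)
        qed
      qed
      have "(\<lambda>a b. T b a)\<^sup>*\<^sup>* (wa ! Suc h1) e1" using irr unfolding irreducible01_def by blast
      moreover have "wa ! Suc h1 \<in> S" using p1h hp by (auto simp: S_def)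
      ultimately have "e1 \<in> S"
        by (induction rule: rtranclp_induct) (auto intro: closed)
      then obtain q where "Suc h1 \<le> q" "q < k" "e1 = wa ! q" by (auto simp: S_def)
      then show False using not_e1 by metis
    qed
  qed
  have inj: "inj_on (\<lambda>j. wa ! j) {h1..<k}"
  proof (rule inj_onI)
    fix x y assume xy: "x \<in> {h1..<k}" "y \<in> {h1..<k}" "wa ! x = wa ! y"
    show "x = y"
    proof (rule ccontr)
      assume "x \<noteq> y"
      then have "x < y \<or> y < x" by arith
      then show False using neq xy by (metis atLeastLessThan_iff)
    qed
  qed
  have CF: "k - h1 \<le> card (UNIV :: 'a set)"
  proof -
    have "card ((\<lambda>j. wa ! j) ` {h1..<k}) = k - h1" using inj by (simp add: card_image)
    moreover have "card ((\<lambda>j. wa ! j) ` {h1..<k}) \<le> card (UNIV :: 'a set)"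
      by (rule card_mono) auto
    ultimately show ?thesis by simp
  qed
  have C2: "h1 \<le> h2 \<longrightarrow> (\<forall>i. int i < int \<delta> - int (card (UNIV :: 'a set)) + 1 \<longrightarrow> corr wb wa i = 0)"
  proof (intro impI allI)
    fix p assume hh12: "h1 \<le> h2" and pr: "int p < int \<delta> - int (card (UNIV :: 'a set)) + 1"
    then have pr': "p + card (UNIV :: 'a set) \<le> \<delta>" by linarith
    show "corr wb wa p = 0"
    proof (rule ccontr)
      assume "corr wb wa p \<noteq> 0"
      then have eq: "take (Suc k - p) wb = drop p wa" using wb(2) by (simp add: corr_def split: if_splits)
      have sh: "wb ! t = wa ! (p + t)" if "t < Suc k - p" for t
      proof -
        have "take (Suc k - p) wb ! t = drop p wa ! t" using eq by simp
        then show ?thesis using that wa(2) wb(2) by simp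
      qed
      show False
      proof (cases "h1 \<le> p + d2")
        case True
        then show False using CF pr' h2d h2k by linarith
      next
        case False
        define t where "t = h1 - p - d2 - 1"
        have t1: "Suc d2 + t = h1 - p" "h1 - p < Suc k - p" "p + (h1 - p) = h1"
          using False h1k unfolding t_def by arith+
        have t2: "Suc d2 + Suc t = Suc (h1 - p)" "Suc (h1 - p) < Suc k - p" "p + Suc (h1 - p) = Suc h1"
          using False h1k unfolding t_def by arith+
        have td: "t < \<delta>" using False hh12 h2d unfolding t_def by arith
        have "wb ! (Suc d2 + t) = e1" using sh[OF t1(2)] t1(1,3) by (simp add: e1_def)
        moreover have "wb ! (Suc d2 + Suc t) = e2" using sh[OF t2(2)] t2(1,3) by (simp add: e2_def)
        ultimately show False using E[OF td] by simp
      qed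
    qed
  qed
  show ?thesis using C1 C2 by blast
qed

end
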